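(* There is an SOS refutation of $Q_n$ of degree $2$ and monomial-size polynomial in $n$.
   Context: For $i\in[n]$, $j\in[2n]$ there are twin variable pairs $x_{ij},\bar x_{ij}$; $\mathrm{ks}_i=\sum_{j\in[2n]}x_{ij}-n$. $Q_n$ consists of: $\mathrm{ks}_1-1/2=0$; $\mathrm{ks}_i^2-\mathrm{ks}_{i+1}=0$ for $i\in[n-1]$; $\mathrm{ks}_n^2=0$. An SOS refutation of $Q$ is an identity $-1=\sum_i r_i^2+\sum_{q\in Q}t_q q+\sum(u(x^2-x)+v(x+\bar x-1))$ over twin pairs, with real polynomials; its degree is the maximum degree of the terms $r_i^2$, $t_q q$, $u(x^2-x)$, $v(x+\bar x-1)$; its monomial-size is the number of explicit monomials counted with multiplicity, where explicit monomials are all monomials appearing in the $r_i$, $t_q$, $q$, $u$, $v$, and the logical axioms. *)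

theory Defs
  imports Complex_Main "HOL-Library.Poly_Mapping"
begin

datatype var = X nat nat | XB nat nat

type_synonym mono = "var \<Rightarrow>\<^sub>0 nat"
type_synonym mpoly = "mono \<Rightarrow>\<^sub>0 real"

definition const :: "real \<Rightarrow> mpoly" where
  "const c = Poly_Mapping.single 0 c"

definition pvar :: "var \<Rightarrow> mpoly" where
  "pvar v = Poly_Mapping.single (Poly_Mapping.single v 1) 1"

definition mono_deg :: "mono \<Rightarrow> nat" where
  "mono_deg m = (\<Sum>v\<in>Poly_Mapping.keys m. Poly_Mapping.lookup m v)"

text \<open>Total degree (degree of the zero polynomial taken to be 0).\<close>
definition tdeg :: "mpoly \<Rightarrow> nat" where
  "tdeg p = Max (insert 0 (mono_deg ` Poly_Mapping.keys p))"

definition nmon :: "mpoly \<Rightarrow> nat" where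
  "nmon p = card (Poly_Mapping.keys p)"

definition ks :: "nat \<Rightarrow> nat \<Rightarrow> mpoly" where
  "ks n i = (\<Sum>j\<in>{1..2*n}. pvar (X i j)) - const (real n)"

text \<open>The system Q_n, as a list of polynomials (each asserted = 0).\<close>
definition Qn :: "nat \<Rightarrow> mpoly list" where
  "Qn n = [ks n 1 - const (1/2)]
          @ map (\<lambda>i. ks n i * ks n i - ks n (Suc i)) [1..<n]
          @ [ks n n * ks n n]"

definition pairs :: "nat \<Rightarrow> (nat \<times> nat) set" where
  "pairs n = {1..n} \<times> {1..2*n}"

definition ax_x :: "nat \<Rightarrow> nat \<Rightarrow> mpoly" where
  "ax_x i j = pvar (X i j) * pvar (X i j) - pvar (X i j)"
definition ax_xb :: "nat \<Rightarrow> nat \<Rightarrow> mpoly" where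
  "ax_xb i j = pvar (XB i j) * pvar (XB i j) - pvar (XB i j)"
definition ax_c :: "nat \<Rightarrow> nat \<Rightarrow> mpoly" where
  "ax_c i j = pvar (X i j) + pvar (XB i j) - const 1"

text \<open>An SOS refutation of Q_n: squares rs, multipliers t (indexed by position in Qn),
  multipliers u, ub, w of the logical axioms.\<close>
definition sos_refutation ::
  "nat \<Rightarrow> mpoly list \<Rightarrow> (nat \<Rightarrow> mpoly) \<Rightarrow> (nat \<Rightarrow> nat \<Rightarrow> mpoly)
     \<Rightarrow> (nat \<Rightarrow> nat \<Rightarrow> mpoly) \<Rightarrow> (nat \<Rightarrow> nat \<Rightarrow> mpoly) \<Rightarrow> bool" where
  "sos_refutation n rs t u ub w \<longleftrightarrow>
     - const 1 = sum_list (map (\<lambda>r. r * r) rs)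
       + (\<Sum>k<length (Qn n). t k * Qn n ! k)
       + (\<Sum>(i,j)\<in>pairs n. u i j * ax_x i j + ub i j * ax_xb i j + w i j * ax_c i j)"

definition sos_degree ::
  "nat \<Rightarrow> mpoly list \<Rightarrow> (nat \<Rightarrow> mpoly) \<Rightarrow> (nat \<Rightarrow> nat \<Rightarrow> mpoly)
     \<Rightarrow> (nat \<Rightarrow> nat \<Rightarrow> mpoly) \<Rightarrow> (nat \<Rightarrow> nat \<Rightarrow> mpoly) \<Rightarrow> nat" where
  "sos_degree n rs t u ub w =
     Max ({0} \<union> (\<lambda>r. tdeg (r * r)) ` set rs
         \<union> (\<lambda>k. tdeg (t k * Qn n ! k)) ` {..<length (Qn n)}
         \<union> (\<lambda>(i,j). tdeg (u i j * ax_x i j)) ` pairs n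
         \<union> (\<lambda>(i,j). tdeg (ub i j * ax_xb i j)) ` pairs n
         \<union> (\<lambda>(i,j). tdeg (w i j * ax_c i j)) ` pairs n)"

definition sos_size ::
  "nat \<Rightarrow> mpoly list \<Rightarrow> (nat \<Rightarrow> mpoly) \<Rightarrow> (nat \<Rightarrow> nat \<Rightarrow> mpoly)
     \<Rightarrow> (nat \<Rightarrow> nat \<Rightarrow> mpoly) \<Rightarrow> (nat \<Rightarrow> nat \<Rightarrow> mpoly) \<Rightarrow> nat" where
  "sos_size n rs t u ub w =
     sum_list (map nmon rs)
     + (\<Sum>k<length (Qn n). nmon (t k) + nmon (Qn n ! k))
     + (\<Sum>(i,j)\<in>pairs n. nmon (u i j) + nmon (ax_x i j) + nmon (ub i j) + nmon (ax_xb i j)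
                          + nmon (w i j) + nmon (ax_c i j))"

end

theory Submission
  imports Defs
begin


definition dle :: "nat \<Rightarrow> mpoly \<Rightarrow> bool" where
  "dle k p \<longleftrightarrow> (\<forall>m\<in>Poly_Mapping.keys p. mono_deg m \<le> k)"

lemma mono_deg_add: "mono_deg (a + b) = mono_deg a + mono_deg b"
  unfolding mono_deg_def
  by (rule setsum_keys_plus_distrib[where f="\<lambda>k v. v"]) (auto simp: lookup_add)

lemma tdeg_le: "dle k p \<Longrightarrow> tdeg p \<le> k"
  unfolding tdeg_def dle_def by (auto intro!: Max.boundedI)

lemma dle_mono: "dle k p \<Longrightarrow> k \<le> l \<Longrightarrow> dle l p"
  unfolding dle_def by force

lemma dle_add: "dle k p \<Longrightarrow> dle k q \<Longrightarrow> dle k (p + q)"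
  unfolding dle_def using keys_add[of p q] by (meson Un_iff subsetD)

lemma dle_diff: "dle k p \<Longrightarrow> dle k q \<Longrightarrow> dle k (p - q)"
  unfolding dle_def using keys_diff[of p q] by (meson Un_iff subsetD)

lemma dle_mult: "dle k p \<Longrightarrow> dle l q \<Longrightarrow> dle (k + l) (p * q)"
  unfolding dle_def
proof
  fix m assume k: "\<forall>m\<in>Poly_Mapping.keys p. mono_deg m \<le> k" and l: "\<forall>m\<in>Poly_Mapping.keys q. mono_deg m \<le> l"
    and m: "m \<in> Poly_Mapping.keys (p * q)"
  then obtain a b where "m = a + b" "a \<in> Poly_Mapping.keys p" "b \<in> Poly_Mapping.keys q"
    using keys_mult[of p q] by blast
  then show "mono_deg m \<le> k + l" using k l by (simp add: mono_deg_add add_mono)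
qed

lemma dle_const: "dle 0 (const c)"
  unfolding dle_def const_def by (simp add: mono_deg_def)

lemma dle_pvar: "dle 1 (pvar v)"
  unfolding dle_def pvar_def by (simp add: mono_deg_def)

lemma dle_zero: "dle 0 0"
  unfolding dle_def by simp

lemma dle_sum: "(\<And>i. i \<in> A \<Longrightarrow> dle k (f i)) \<Longrightarrow> dle k (sum f A)"
  by (induction A rule: infinite_finite_induct) (auto simp: dle_zero dle_add intro: dle_mono[OF dle_zero])

lemma nmon_add: "nmon (p + q) \<le> nmon p + nmon q"
  unfolding nmon_def by (meson card_Un_le card_mono finite_UnI finite_keys keys_add le_trans)

lemma nmon_diff: "nmon (p - q) \<le> nmon p + nmon q"
  unfolding nmon_def by (meson card_Un_le card_mono finite_UnI finite_keys keys_diff le_trans)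

lemma nmon_mult: "nmon (p * q) \<le> nmon p * nmon q"
proof -
  have "Poly_Mapping.keys (p * q) \<subseteq> (\<lambda>(a,b). a + b) ` (Poly_Mapping.keys p \<times> Poly_Mapping.keys q)"
    using keys_mult[of p q] by auto
  then have "card (Poly_Mapping.keys (p * q)) \<le> card ((\<lambda>(a,b). a + b) ` (Poly_Mapping.keys p \<times> Poly_Mapping.keys q))"
    by (intro card_mono) auto
  also have "\<dots> \<le> card (Poly_Mapping.keys p \<times> Poly_Mapping.keys q)" by (rule card_image_le) auto
  finally show ?thesis unfolding nmon_def by (simp add: card_cartesian_product)
qed

lemma nmon_const: "nmon (const c) \<le> 1"
  unfolding nmon_def const_def by simp

lemma nmon_pvar: "nmon (pvar v) \<le> 1"
  unfolding nmon_def pvar_def by simp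

lemma nmon_zero: "nmon 0 = 0"
  unfolding nmon_def by simp

lemma nmon_sum: "nmon (sum f A) \<le> (\<Sum>i\<in>A. nmon (f i))"
  by (induction A rule: infinite_finite_induct) (auto simp: nmon_zero intro: order_trans[OF nmon_add])

lemma const_add: "const (a + b) = const a + const b"
  unfolding const_def by (simp add: single_add)
lemma const_diff: "const (a - b) = const a - const b"
  unfolding const_def by (simp add: single_diff)
lemma const_mult: "const (a * b) = const a * const b"
  unfolding const_def by (simp add: mult_single)
lemma const_1: "const 1 = 1"
  unfolding const_def by simp
lemma const_0: "const 0 = 0"
  unfolding const_def by simp

lemma ks_dle: "dle 1 (ks n i)"
  unfolding ks_def by (intro dle_diff dle_sum dle_pvar dle_mono[OF dle_const]) auto

lemma ks_nmon: "nmon (ks n i) \<le> 2*n + 1"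
proof -
  have "nmon (ks n i) \<le> nmon (\<Sum>j\<in>{1..2*n}. pvar (X i j)) + nmon (const (real n))"
    unfolding ks_def by (rule nmon_diff)
  also have "\<dots> \<le> (\<Sum>j\<in>{1..2*n}. nmon (pvar (X i j))) + 1"
    by (intro add_mono nmon_sum nmon_const)
  also have "\<dots> \<le> (\<Sum>j\<in>{1..2*n}. 1) + 1"
    by (intro add_mono sum_mono nmon_pvar) auto
  finally show ?thesis by simp
qed



fun PP :: "nat \<Rightarrow> real" where
  "PP 0 = 1"
| "PP (Suc i) = 2^(Suc i) * (PP i)^2"

lemma PP_pos: "PP i > 0"
  by (induction i) auto

definition bb :: "nat \<Rightarrow> real" where
  "bb i = PP (i - 1) / (2 * PP i)"

lemma bb_rel: "2 * PP (Suc m) * bb (Suc m) = PP m"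
  unfolding bb_def using PP_pos[of "Suc m"] by simp

lemma s1: "sum f {1..Suc m} = sum f {1..m} + (f (Suc m) :: 'a::comm_monoid_add)"
  by simp

lemma tele:
  fixes Y :: "nat \<Rightarrow> mpoly"
  shows "(\<Sum>i\<in>{1..m}. const (PP i) * ((Y i - const (bb i)) * (Y i - const (bb i))))
     = (\<Sum>i\<in>{1..m}. const (PP i) * (Y i * Y i - Y (Suc i))) + const (PP m) * Y (Suc m) - Y 1
       + const (\<Sum>i\<in>{1..m}. PP i * (bb i)^2)"
proof (induction m)
  case 0
  then show ?case by (simp add: const_0 const_1)
next
  case (Suc m)
  have e1: "const (PP m) = 2 * const (PP (Suc m)) * const (bb (Suc m))"
    using bb_rel[of m] by (metis const_mult const_add mult_2)
  have e2: "const (\<Sum>i\<in>{1..Suc m}. PP i * (bb i)^2) = const (\<Sum>i\<in>{1..m}. PP i * (bb i)^2)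
     + const (PP (Suc m)) * const (bb (Suc m)) * const (bb (Suc m))"
    by (simp only: s1 const_add const_mult[symmetric]) (simp add: power2_eq_square mult_ac del: PP.simps)
  show ?case
    unfolding s1 Suc.IH by (simp add: algebra_simps const_add const_mult e1 power2_eq_square del: PP.simps)
qed

lemma term_eq: "PP (Suc i) * (bb (Suc i))^2 = 1 / (4 * 2^(Suc i))"
  using PP_pos[of i] unfolding bb_def by (simp add: field_simps power2_eq_square)

lemma Ssum: "(\<Sum>i\<in>{1..m}. PP i * (bb i)^2) = 1/4 - 1/(4 * 2^m)"
proof (induction m)
  case 0 then show ?case by simp
next
  case (Suc m)
  show ?case unfolding s1 Suc.IH term_eq by (simp add: field_simps)
qed

lemma Sle: "4 * (\<Sum>i\<in>{1..m}. PP i * (bb i)^2) \<le> 1"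
  unfolding Ssum by simp



lemma len_Qn: "n \<ge> 1 \<Longrightarrow> length (Qn n) = Suc n"
  unfolding Qn_def by simp

lemma Qn0: "Qn n ! 0 = ks n 1 - const (1/2)"
  unfolding Qn_def by simp

lemma QnK: "1 \<le> k \<Longrightarrow> k < n \<Longrightarrow> Qn n ! k = ks n k * ks n k - ks n (Suc k)"
  unfolding Qn_def apply (simp add: nth_append) by arith

lemma QnN: "n \<ge> 1 \<Longrightarrow> Qn n ! n = ks n n * ks n n"
  unfolding Qn_def by (simp add: nth_append)

lemma const_uminus: "const (- a) = - const a"
  unfolding const_def by (simp add: single_uminus)

lemma const_neg1: "const (-1) = - 1"
  unfolding const_def by (simp add: single_uminus)

lemma refut:
  assumes n: "n \<ge> 1"
  defines "S \<equiv> (\<Sum>i\<in>{1..n}. PP i * (bb i)^2)"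
  defines "r \<equiv> (\<lambda>i. const (sqrt (4 * PP i)) * (ks n i - const (bb i)))"
  defines "rs \<equiv> map r [1..<Suc n] @ [const (sqrt (1 - 4 * S))]"
  defines "t \<equiv> (\<lambda>k. if k = 0 then const 4 else const (- (4 * PP k)))"
  shows "sos_refutation n rs t (\<lambda>_ _. 0) (\<lambda>_ _. 0) (\<lambda>_ _. 0)"
proof -
  define Y where "Y = (\<lambda>i. if i \<le> n then ks n i else 0)"
  have S1: "1 - 4 * S \<ge> 0" using Sle[of n] unfolding S_def by simp
  have rr: "r i * r i = const 4 * (const (PP i) * ((ks n i - const (bb i)) * (ks n i - const (bb i))))" for i
  proof -
    have "const (sqrt (4 * PP i)) * const (sqrt (4 * PP i)) = const 4 * const (PP i)"
      using PP_pos[of i] by (simp add: const_mult[symmetric])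
    moreover have "r i * r i = (const (sqrt (4 * PP i)) * const (sqrt (4 * PP i))) * ((ks n i - const (bb i)) * (ks n i - const (bb i)))"
      unfolding r_def by (simp only: mult.assoc mult.commute mult.left_commute)
    ultimately show ?thesis by (simp only: mult.assoc)
  qed
  have c1: "const (sqrt (1 - 4 * S)) * const (sqrt (1 - 4 * S)) = const (1 - 4 * S)"
    using S1 by (simp add: const_mult[symmetric])
  let ?A = "\<Sum>i\<in>{1..n}. const (PP i) * (Y i * Y i - Y (Suc i))"
  have sq: "sum_list (map (\<lambda>r. r * r) rs) = const 4 * (\<Sum>i\<in>{1..n}. const (PP i) * ((Y i - const (bb i)) * (Y i - const (bb i)))) + const (1 - 4 * S)"
  proof -
    have "sum_list (map (\<lambda>r. r * r) rs) = (\<Sum>i\<in>{1..n}. r i * r i) + const (1 - 4 * S)"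
      unfolding rs_def using c1 by (simp add: map_map o_def interv_sum_list_conv_sum_set_nat atLeastLessThanSuc_atLeastAtMost del: upt_Suc)
    also have "(\<Sum>i\<in>{1..n}. r i * r i) = const 4 * (\<Sum>i\<in>{1..n}. const (PP i) * ((Y i - const (bb i)) * (Y i - const (bb i))))"
      unfolding rr sum_distrib_left by (rule sum.cong) (auto simp: Y_def)
    finally show ?thesis .
  qed
  have tel: "(\<Sum>i\<in>{1..n}. const (PP i) * ((Y i - const (bb i)) * (Y i - const (bb i)))) = ?A - ks n 1 + const S"
    using tele[where m=n and Y=Y] n unfolding S_def by (simp add: Y_def)
  have split: "(\<Sum>k<Suc n. f k) = f 0 + (\<Sum>k\<in>{1..n}. f k)" for f :: "nat \<Rightarrow> mpoly"
  proof -
    have "{..<Suc n} = insert 0 {1..n}" by auto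
    then show ?thesis by simp
  qed
  have tq: "(\<Sum>k<length (Qn n). t k * Qn n ! k) = const 4 * (ks n 1 - const (1/2)) - const 4 * ?A"
  proof -
    have "(\<Sum>k\<in>{1..n}. t k * Qn n ! k) = (\<Sum>k\<in>{1..n}. - (const 4 * (const (PP k) * (Y k * Y k - Y (Suc k)))))"
    proof (rule sum.cong)
      fix k assume k: "k \<in> {1..n}"
      have q: "Qn n ! k = Y k * Y k - Y (Suc k)"
      proof (cases "k < n")
        case True then show ?thesis using k QnK[of k n] by (simp add: Y_def)
      next
        case False then have "k = n" using k by simp
        then show ?thesis using QnN[OF n] by (simp add: Y_def)
      qed
      have "t k = - (const 4 * const (PP k))" using k
        by (simp add: t_def const_uminus const_mult)
      then show "t k * Qn n ! k = - (const 4 * (const (PP k) * (Y k * Y k - Y (Suc k))))"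
        unfolding q by (simp add: algebra_simps)
    qed simp
    then show ?thesis unfolding len_Qn[OF n] split
      by (simp add: t_def Qn0 sum_negf sum_distrib_left)
  qed
  have h: "const 4 * const S + const (1 - 4*S) - const 4 * const (1/2) = - 1"
    by (simp add: const_mult[symmetric] const_add[symmetric] const_diff[symmetric] flip: const_neg1)
  show ?thesis
    unfolding sos_refutation_def sq tel tq
    using h by (simp add: const_1 algebra_simps)
qed



lemma Qn_dle: "q \<in> set (Qn n) \<Longrightarrow> dle 2 q"
  unfolding Qn_def
  using ks_dle[of n]
  by (auto intro!: dle_diff dle_mono[OF dle_const] intro: dle_mono[OF _ one_le_numeral]
           dle_mono[OF dle_mult[of 1 _ 1], simplified])

lemma Qn_nmon: "q \<in> set (Qn n) \<Longrightarrow> nmon q \<le> (2*n+1)*(2*n+1) + (2*n+1) + 1"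
proof -
  have a: "nmon (ks n i * ks n i) \<le> (2*n+1)*(2*n+1)" for i
    using nmon_mult[of "ks n i" "ks n i"] ks_nmon[of n i] mult_le_mono by (meson le_trans)
  have b: "nmon (ks n i - const c) \<le> (2*n+1) + 1" for i c
    using nmon_diff[of "ks n i" "const c"] ks_nmon[of n i] nmon_const[of c] by linarith
  have c: "nmon (ks n i * ks n i - ks n j) \<le> (2*n+1)*(2*n+1) + (2*n+1)" for i j
    using nmon_diff[of "ks n i * ks n i" "ks n j"] a[of i] ks_nmon[of n j] by linarith
  have a': "nmon (ks n i * ks n i) \<le> (2*n+1)*(2*n+1) + (2*n+1) + 1" for i using a[of i] by linarith
  have b': "nmon (ks n i - const c) \<le> (2*n+1)*(2*n+1) + (2*n+1) + 1" for i c using b[of i c] by simp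
  have c': "nmon (ks n i * ks n i - ks n j) \<le> (2*n+1)*(2*n+1) + (2*n+1) + 1" for i j using c[of i j] by linarith
  assume "q \<in> set (Qn n)"
  then show ?thesis unfolding Qn_def using a' b' c'
    by (auto simp del: mult_Suc mult_Suc_right add_Suc add_Suc_right)
qed

lemma sum_list_bound: "(\<And>x. x \<in> set xs \<Longrightarrow> f x \<le> B) \<Longrightarrow> sum_list (map f xs) \<le> length xs * (B::nat)"
  by (induction xs) (auto simp: add_mono)

lemma ax_nmon: "nmon (ax_x i j) \<le> 2" "nmon (ax_xb i j) \<le> 2" "nmon (ax_c i j) \<le> 3"
proof -
  show "nmon (ax_x i j) \<le> 2" unfolding ax_x_def
    using nmon_diff[of "pvar (X i j) * pvar (X i j)" "pvar (X i j)"] nmon_mult[of "pvar (X i j)" "pvar (X i j)"] nmon_pvar[of "X i j"]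
    by (metis (no_types, lifting) le_trans add_mono mult_le_mono one_add_one nat_mult_1)
  show "nmon (ax_xb i j) \<le> 2" unfolding ax_xb_def
    using nmon_diff[of "pvar (XB i j) * pvar (XB i j)" "pvar (XB i j)"] nmon_mult[of "pvar (XB i j)" "pvar (XB i j)"] nmon_pvar[of "XB i j"]
    by (metis (no_types, lifting) le_trans add_mono mult_le_mono one_add_one nat_mult_1)
  show "nmon (ax_c i j) \<le> 3" unfolding ax_c_def
    using nmon_diff[of "pvar (X i j) + pvar (XB i j)" "const 1"] nmon_add[of "pvar (X i j)" "pvar (XB i j)"]
      nmon_pvar[of "X i j"] nmon_pvar[of "XB i j"] nmon_const[of 1]
    by linarith
qed

lemma card_pairs: "card (pairs n) = n * (2*n)"
  unfolding pairs_def by (simp add: card_cartesian_product)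



lemma tdeg_zero: "tdeg 0 = 0"
  unfolding tdeg_def by simp

lemma arith_bound: "(n::nat) \<ge> 1 \<Longrightarrow>
   (n+1)*(2*n+2) + (n+1)*(1 + ((2*n+1)*(2*n+1) + (2*n+1) + 1)) + n*(2*n)*7 \<le> 100 * n^3"
proof -
  assume n: "n \<ge> 1"
  have a: "n \<le> n*n" using n by simp
  have b: "n*n \<le> n*n*n" using n by simp
  have c: "n^3 = n*n*n" by (simp add: power3_eq_cube)
  have d: "1 \<le> n*n*n" using n by (metis a b le_trans)
  have "6 + 14*n + 26*(n*n) \<le> 96*(n*n*n)" using a b d n by linarith
  then show ?thesis unfolding c by (simp add: algebra_simps)
qed

theorem lemma6:
  shows "\<exists>(c::nat) (d::nat). \<forall>n\<ge>1. \<exists>rs t u ub w.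
           sos_refutation n rs t u ub w \<and>
           sos_degree n rs t u ub w \<le> 2 \<and>
           sos_size n rs t u ub w \<le> c * n ^ d"
proof (rule exI[of _ 100], rule exI[of _ 3], intro allI impI)
  fix n :: nat assume n: "n \<ge> 1"
  define S where "S \<equiv> (\<Sum>i\<in>{1..n}. PP i * (bb i)^2)"
  define r where "r \<equiv> (\<lambda>i. const (sqrt (4 * PP i)) * (ks n i - const (bb i)))"
  define rs where "rs \<equiv> map r [1..<Suc n] @ [const (sqrt (1 - 4 * S))]"
  define t where "t \<equiv> (\<lambda>k::nat. if k = 0 then const 4 else const (- (4 * PP k)))"
  define z where "z \<equiv> (\<lambda>(_::nat) (_::nat). (0::mpoly))"
  have ref: "sos_refutation n rs t z z z"
    unfolding rs_def t_def r_def S_def z_def by (rule refut[OF n])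
  have rs_dle: "dle 1 x" if "x \<in> set rs" for x
  proof -
    have "dle 1 (r i)" for i
      unfolding r_def using dle_mult[OF dle_const dle_diff[OF ks_dle dle_mono[OF dle_const]]] by simp
    then show ?thesis using that dle_mono[OF dle_const] unfolding rs_def by auto
  qed
  have t_dle: "dle 0 (t k)" for k unfolding t_def by (simp add: dle_const)
  have deg: "sos_degree n rs t z z z \<le> 2"
    unfolding sos_degree_def
  proof (rule Max.boundedI)
    show "finite ({0} \<union> (\<lambda>r. tdeg (r * r)) ` set rs \<union> (\<lambda>k. tdeg (t k * Qn n ! k)) ` {..<length (Qn n)} \<union>
     (\<lambda>(i, j). tdeg (z i j * ax_x i j)) ` pairs n \<union> (\<lambda>(i, j). tdeg (z i j * ax_xb i j)) ` pairs n \<union>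
     (\<lambda>(i, j). tdeg (z i j * ax_c i j)) ` pairs n)"
      by (simp add: pairs_def)
  next
    fix a assume "a \<in> {0} \<union> (\<lambda>r. tdeg (r * r)) ` set rs \<union> (\<lambda>k. tdeg (t k * Qn n ! k)) ` {..<length (Qn n)} \<union>
     (\<lambda>(i, j). tdeg (z i j * ax_x i j)) ` pairs n \<union> (\<lambda>(i, j). tdeg (z i j * ax_xb i j)) ` pairs n \<union>
     (\<lambda>(i, j). tdeg (z i j * ax_c i j)) ` pairs n"
    then show "a \<le> 2"
    proof (elim UnE imageE)
      fix x assume "x \<in> set rs" "a = tdeg (x * x)"
      then show ?thesis using tdeg_le[OF dle_mult[OF rs_dle[of x] rs_dle[of x]]] by (simp add: numeral_2_eq_2)
    next
      fix k assume "k \<in> {..<length (Qn n)}" "a = tdeg (t k * Qn n ! k)"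
      then have "Qn n ! k \<in> set (Qn n)" by simp
      then show ?thesis using \<open>a = _\<close> tdeg_le[OF dle_mult[OF t_dle[of k] Qn_dle]] by (simp add: numeral_2_eq_2)
    qed (auto simp: z_def tdeg_zero)
  qed auto
  have rs_nmon: "nmon x \<le> 2*n+2" if "x \<in> set rs" for x
  proof -
    have "nmon (r i) \<le> 2*n+2" for i
    proof -
      have "nmon (r i) \<le> nmon (const (sqrt (4 * PP i))) * nmon (ks n i - const (bb i))"
        unfolding r_def by (rule nmon_mult)
      also have "\<dots> \<le> 1 * (2*n+2)"
      proof (rule mult_le_mono)
        show "nmon (ks n i - const (bb i)) \<le> 2*n+2"
          using nmon_diff[of "ks n i" "const (bb i)"] ks_nmon[of n i] nmon_const[of "bb i"] by linarith
      qed (rule nmon_const)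
      finally show ?thesis by simp
    qed
    then show ?thesis using that nmon_const[of "sqrt (1 - 4 * S)"] unfolding rs_def by auto
  qed
  have s1: "sum_list (map nmon rs) \<le> (n+1)*(2*n+2)"
  proof -
    have "length rs = n+1" by (simp add: rs_def del: upt_Suc)
    then show ?thesis using sum_list_bound[of rs nmon "2*n+2", OF rs_nmon] by simp
  qed
  have s2: "(\<Sum>k<length (Qn n). nmon (t k) + nmon (Qn n ! k)) \<le> (n+1)*(1 + ((2*n+1)*(2*n+1) + (2*n+1) + 1))"
  proof -
    have "(\<Sum>k<length (Qn n). nmon (t k) + nmon (Qn n ! k)) \<le> card {..<length (Qn n)} * (1 + ((2*n+1)*(2*n+1) + (2*n+1) + 1))"
      using sum_bounded_above[of "{..<length (Qn n)}" "\<lambda>k. nmon (t k) + nmon (Qn n ! k)" "1 + ((2*n+1)*(2*n+1) + (2*n+1) + 1)"]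
      by (metis (no_types, lifting) add_mono lessThan_iff nmon_const Qn_nmon nth_mem of_nat_id t_def)
    then show ?thesis using len_Qn[OF n] by simp
  qed
  have s3: "(\<Sum>(i,j)\<in>pairs n. nmon (z i j) + nmon (ax_x i j) + nmon (z i j) + nmon (ax_xb i j)
                          + nmon (z i j) + nmon (ax_c i j)) \<le> n*(2*n)*7"
  proof -
    have "(\<Sum>(i,j)\<in>pairs n. nmon (z i j) + nmon (ax_x i j) + nmon (z i j) + nmon (ax_xb i j)
                          + nmon (z i j) + nmon (ax_c i j)) \<le> card (pairs n) * 7"
    proof -
      have "(case ij of (i, j) \<Rightarrow> nmon (z i j) + nmon (ax_x i j) + nmon (z i j) + nmon (ax_xb i j)
                          + nmon (z i j) + nmon (ax_c i j)) \<le> 7" for ij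
      proof (cases ij)
        case (Pair i j)
        then show ?thesis using ax_nmon[of i j] by (simp add: z_def nmon_zero)
      qed
      then show ?thesis using sum_bounded_above[of "pairs n" "\<lambda>(i,j). nmon (z i j) + nmon (ax_x i j) + nmon (z i j) + nmon (ax_xb i j)
                          + nmon (z i j) + nmon (ax_c i j)" 7] by simp
    qed
    then show ?thesis by (simp add: card_pairs)
  qed
  have "sos_size n rs t z z z \<le> 100 * n^3"
    unfolding sos_size_def using s1 s2 s3 arith_bound[OF n] by linarith
  then show "\<exists>rs t u ub w. sos_refutation n rs t u ub w \<and> sos_degree n rs t u ub w \<le> 2 \<and>
     sos_size n rs t u ub w \<le> 100 * n ^ 3"
    using ref deg by blast
qed


end
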